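(* Let $G$ be a compactly generated (second countable) locally compact group, $X$ a compact (metrizable) $G$-space, and $(\mu_n)$ a sequence of $G$-invariant Borel probability measures on $X$ with uniform spectral gap. If $\mu$ is a weak-$*$ limit of the sequence $(\mu_n)$, then $(X,\mu)$ has spectral gap.
   Context: A Borel $G$-space $(X,\mu)$ with invariant probability measure has spectral gap if the Koopman representation of $G$ on $L^2_0(X,\mu)=\{f\in L^2(X,\mu):\int f\,d\mu=0\}$ does not almost have invariant vectors. A sequence $(X_n,\mu_n)$ of such spaces has uniform spectral gap if the natural representation of $G$ on $\bigoplus_n L^2_0(X_n,\mu_n)$ does not almost have invariant vectors. *)

theory Defs
  imports "HOL-Analysis.Analysis" "HOL-Probability.Probability"
begin

text \<open>Topological groups are written additively (type class topological_group_add,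
  not assumed commutative): the group law is +, identity 0, inverse uminus.\<close>

definition generated_subgroup :: "'g::group_add set \<Rightarrow> 'g set" where
  "generated_subgroup K = \<Inter>{H. K \<subseteq> H \<and> 0 \<in> H \<and> (\<forall>a\<in>H. \<forall>b\<in>H. a + b \<in> H) \<and> (\<forall>a\<in>H. - a \<in> H)}"

definition compactly_generated :: "'g::{group_add,topological_space} itself \<Rightarrow> bool" where
  "compactly_generated _ \<longleftrightarrow> (\<exists>K::'g set. compact K \<and> generated_subgroup K = UNIV)"

definition continuous_action :: "('g::{group_add,topological_space} \<Rightarrow> 'x::topological_space \<Rightarrow> 'x) \<Rightarrow> bool" where
  "continuous_action act \<longleftrightarrow>
     continuous_on UNIV (\<lambda>(g, x). act g x) \<and> (\<forall>x. act 0 x = x) \<and>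
     (\<forall>g h x. act (g + h) x = act g (act h x))"

definition borel_prob :: "'x::topological_space measure \<Rightarrow> bool" where
  "borel_prob M \<longleftrightarrow> prob_space M \<and> sets M = sets borel"

definition invariant_measure :: "('g \<Rightarrow> 'x \<Rightarrow> 'x) \<Rightarrow> 'x::topological_space measure \<Rightarrow> bool" where
  "invariant_measure act M \<longleftrightarrow> (\<forall>g. \<forall>A\<in>sets M. emeasure M (act g -` A \<inter> space M) = emeasure M A)"

definition L2_0 :: "'x measure \<Rightarrow> ('x \<Rightarrow> complex) \<Rightarrow> bool" where
  "L2_0 M f \<longleftrightarrow> f \<in> borel_measurable M \<and> integrable M (\<lambda>x. (cmod (f x))\<^sup>2) \<and>
                 (LINT x|M. f x) = 0"

definition L2_norm_sq :: "'x measure \<Rightarrow> ('x \<Rightarrow> complex) \<Rightarrow> real" where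
  "L2_norm_sq M f = (LINT x|M. (cmod (f x))\<^sup>2)"

definition koopman :: "('g::group_add \<Rightarrow> 'x \<Rightarrow> 'x) \<Rightarrow> 'g \<Rightarrow> ('x \<Rightarrow> complex) \<Rightarrow> ('x \<Rightarrow> complex)" where
  "koopman act g f = (\<lambda>x. f (act (- g) x))"

definition almost_inv_L2_0 ::
  "('g::{group_add,topological_space} \<Rightarrow> 'x \<Rightarrow> 'x) \<Rightarrow> 'x measure \<Rightarrow> bool" where
  "almost_inv_L2_0 act M \<longleftrightarrow>
     (\<forall>Q::'g set. \<forall>\<epsilon>>0. compact Q \<longrightarrow>
        (\<exists>f. L2_0 M f \<and> L2_norm_sq M f = 1 \<and>
             (\<forall>g\<in>Q. sqrt (L2_norm_sq M (\<lambda>x. koopman act g f x - f x)) < \<epsilon>)))"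

definition spectral_gap :: "('g::{group_add,topological_space} \<Rightarrow> 'x \<Rightarrow> 'x) \<Rightarrow> 'x measure \<Rightarrow> bool" where
  "spectral_gap act M \<longleftrightarrow> \<not> almost_inv_L2_0 act M"

text \<open>Representation on the Hilbert direct sum of the L^2_0(X,M n) almost has invariant
  vectors; elements of the direct sum are sequences (f n) with f n in L^2_0(M n) and
  sum of squared norms finite.\<close>
definition almost_inv_direct_sum ::
  "('g::{group_add,topological_space} \<Rightarrow> 'x \<Rightarrow> 'x) \<Rightarrow> (nat \<Rightarrow> 'x measure) \<Rightarrow> bool" where
  "almost_inv_direct_sum act M \<longleftrightarrow>
     (\<forall>Q::'g set. \<forall>\<epsilon>>0. compact Q \<longrightarrow>
        (\<exists>f :: nat \<Rightarrow> 'x \<Rightarrow> complex.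
             (\<forall>n. L2_0 (M n) (f n)) \<and> ((\<lambda>n. L2_norm_sq (M n) (f n)) sums 1) \<and>
             (\<forall>g\<in>Q. summable (\<lambda>n. L2_norm_sq (M n) (\<lambda>x. koopman act g (f n) x - f n x)) \<and>
                     sqrt (\<Sum>n. L2_norm_sq (M n) (\<lambda>x. koopman act g (f n) x - f n x)) < \<epsilon>)))"

definition uniform_spectral_gap ::
  "('g::{group_add,topological_space} \<Rightarrow> 'x \<Rightarrow> 'x) \<Rightarrow> (nat \<Rightarrow> 'x measure) \<Rightarrow> bool" where
  "uniform_spectral_gap act M \<longleftrightarrow> \<not> almost_inv_direct_sum act M"

definition weak_star_converges :: "(nat \<Rightarrow> 'x::topological_space measure) \<Rightarrow> 'x measure \<Rightarrow> bool" where
  "weak_star_converges M N \<longleftrightarrow>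
     (\<forall>f::'x \<Rightarrow> real. continuous_on UNIV f \<longrightarrow>
        (\<lambda>n. LINT x|M n. f x) \<longlonglongrightarrow> (LINT x|N. f x))"

end

theory Submission
  imports Defs
begin

lemma cont_meas:
  fixes h :: "'x::topological_space \<Rightarrow> 'b::topological_space"
  assumes "sets M = sets borel" "continuous_on UNIV h"
  shows "h \<in> borel_measurable M"
  unfolding measurable_cong_sets[OF assms(1) refl] by (rule borel_measurable_continuous_onI[OF assms(2)])

lemma cont_integrable:
  fixes h :: "'x::metric_space \<Rightarrow> 'b::{banach,second_countable_topology}"
  assumes "compact (UNIV::'x set)" "finite_measure M" "sets M = sets borel" "continuous_on UNIV h"
  shows "integrable M h"
proof -
  have "compact (range h)" using compact_continuous_image assms by blast
  then obtain B where B: "\<forall>y\<in>range h. norm y \<le> B" using compact_imp_bounded bounded_iff by metis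
  show ?thesis
    by (rule finite_measure.integrable_const_bound[OF assms(2), of _ B])
       (use B cont_meas[OF assms(3,4)] in auto)
qed

lemma bcont_integrable:
  fixes h :: "'x::topological_space \<Rightarrow> 'b::{banach,second_countable_topology}"
  assumes "finite_measure M" "sets M = sets borel" "continuous_on UNIV h" "\<And>x. norm (h x) \<le> B"
  shows "integrable M h"
  by (rule finite_measure.integrable_const_bound[OF assms(1), of _ B])
     (use assms cont_meas[OF assms(2,3)] in auto)

lemma open_approx:
  fixes U :: "'x::metric_space set" assumes "open U"
  obtains h :: "nat \<Rightarrow> 'x \<Rightarrow> real" where "\<And>k. continuous_on UNIV (h k)"
    "\<And>k x. 0 \<le> h k x \<and> h k x \<le> 1" "\<And>x. (\<lambda>k. h k x) \<longlonglongrightarrow> indicator U x"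
proof (cases "U = UNIV")
  case True
  show ?thesis by (rule that[of "\<lambda>k x. 1"]) (auto simp: True)
next
  case False
  define h where "h k x = min 1 (real k * infdist x (- U))" for k x
  show ?thesis
  proof (rule that[of h])
    show "continuous_on UNIV (h k)" for k
      unfolding h_def by (intro continuous_on_min continuous_on_const continuous_on_mult continuous_on_infdist continuous_on_id)
    show "0 \<le> h k x \<and> h k x \<le> 1" for k x
      unfolding h_def by (simp add: infdist_nonneg)
    show "(\<lambda>k. h k x) \<longlonglongrightarrow> indicator U x" for x
    proof (cases "x \<in> U")
      case True
      have d: "0 < infdist x (- U)"
        using infdist_pos_not_in_closed[of "- U" x] False True assms by auto
      obtain N where N: "1 / infdist x (- U) < real N" using reals_Archimedean2 by blast
      have "eventually (\<lambda>k. h k x = 1) sequentially"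
        unfolding eventually_sequentially
      proof (intro exI allI impI)
        fix k assume "N \<le> k"
        then have "1 / infdist x (- U) < real k" using N by linarith
        then have "1 \<le> real k * infdist x (- U)" using d by (simp add: field_simps)
        then show "h k x = 1" unfolding h_def by simp
      qed
      then have "(\<lambda>k. h k x) \<longlonglongrightarrow> 1" by (rule tendsto_eventually)
      then show ?thesis using True by simp
    next
      case False
      then have "infdist x (- U) = 0" by (simp add: infdist_zero)
      then show ?thesis using False by (simp add: h_def)
    qed
  qed
qed

lemma open_approx_integral:
  fixes U :: "'x::metric_space set"
  assumes "open U" "finite_measure M" "sets M = sets borel"
    and h: "\<And>k. continuous_on UNIV (h k)" "\<And>k x. 0 \<le> h k x \<and> h k x \<le> 1" "\<And>x. (\<lambda>k. h k x) \<longlonglongrightarrow> indicator U x"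
  shows "(\<lambda>k. \<integral>x. h k x \<partial>M) \<longlonglongrightarrow> measure M U"
proof -
  have "(\<lambda>k. \<integral>x. h k x \<partial>M) \<longlonglongrightarrow> (\<integral>x. indicator U x \<partial>M)"
  proof (rule integral_dominated_convergence[where w="\<lambda>x. 1"])
    show "indicator U \<in> borel_measurable M"
      unfolding measurable_cong_sets[OF assms(3) refl] using assms(1) by (intro borel_measurable_indicator borel_open)
    show "h k \<in> borel_measurable M" for k using cont_meas[OF assms(3) h(1)] .
    show "integrable M (\<lambda>x. 1::real)" using finite_measure.integrable_const[OF assms(2)] .
    show "AE x in M. (\<lambda>k. h k x) \<longlonglongrightarrow> indicator U x" using h(3) by (intro AE_I2)
    show "AE x in M. norm (h k x) \<le> 1" for k using h(2) by (intro AE_I2) (simp add: abs_le_iff)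
  qed
  moreover have "U \<in> sets M" using assms(1,3) by simp
  moreover have "emeasure M U \<noteq> \<infinity>" using finite_measure.emeasure_finite[OF assms(2)] by simp
  moreover have "U \<inter> space M = U" using assms(3) by (simp add: sets_eq_imp_space_eq)
  then have "(\<integral>x. indicator U x \<partial>M) = measure M U" using Bochner_Integration.integral_indicator[of M U] by (simp only:)
  ultimately show ?thesis by (simp only:)
qed

lemma measure_eq_cont:
  fixes M N :: "'x::metric_space measure"
  assumes M: "finite_measure M" "sets M = sets borel" and N: "finite_measure N" "sets N = sets borel"
   and eq: "\<And>\<phi>::'x\<Rightarrow>real. continuous_on UNIV \<phi> \<Longrightarrow> (\<forall>x. 0\<le>\<phi> x \<and> \<phi> x \<le> 1) \<Longrightarrow> (\<integral>x. \<phi> x \<partial>M) = (\<integral>x. \<phi> x \<partial>N)"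
  shows "M = N"
proof (rule measure_eqI_generator_eq[where E="{S. open S}" and \<Omega>=UNIV and A="\<lambda>_. UNIV"])
  show "Int_stable {S::'x set. open S}" unfolding Int_stable_def by (simp add: open_Int)
  show "{S::'x set. open S} \<subseteq> Pow UNIV" by auto
  show "sets M = sigma_sets UNIV {S. open S}" using M(2) sets_borel by (rule trans)
  show "sets N = sigma_sets UNIV {S. open S}" using N(2) sets_borel by (rule trans)
  show "range (\<lambda>_. UNIV) \<subseteq> {S::'x set. open S}" by auto
  show "(\<Union>i::nat. UNIV) = (UNIV::'x set)" by auto
  show "emeasure M UNIV \<noteq> \<infinity>" for i::nat using finite_measure.emeasure_finite[OF M(1)] by simp
  fix U :: "'x set" assume "U \<in> {S. open S}"
  then have U: "open U" by simp
  obtain h :: "nat \<Rightarrow> 'x \<Rightarrow> real" where h: "\<And>k. continuous_on UNIV (h k)"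
    "\<And>k x. 0 \<le> h k x \<and> h k x \<le> 1" "\<And>x. (\<lambda>k. h k x) \<longlonglongrightarrow> indicator U x"
    using open_approx[OF U] by blast
  have 1: "(\<lambda>k. \<integral>x. h k x \<partial>M) \<longlonglongrightarrow> measure M U" by (rule open_approx_integral[OF U M h])
  have 2: "(\<lambda>k. \<integral>x. h k x \<partial>M) \<longlonglongrightarrow> measure N U"
  proof -
    have "(\<integral>x. h k x \<partial>M) = (\<integral>x. h k x \<partial>N)" for k using eq[of "h k"] h(1)[of k] h(2)[of k] by blast
    then have "(\<lambda>k. \<integral>x. h k x \<partial>M) = (\<lambda>k. \<integral>x. h k x \<partial>N)" by (rule ext)
    then show ?thesis using open_approx_integral[OF U N h] by (simp only:)
  qed
  have "measure M U = measure N U" using LIMSEQ_unique[OF 1 2] .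
  then show "emeasure M U = emeasure N U"
    using finite_measure.emeasure_eq_measure[OF M(1)] finite_measure.emeasure_eq_measure[OF N(1)] by simp
qed


lemma lim_ev_lt:
  assumes "f \<longlonglongrightarrow> (l::real)" "l < e" shows "\<exists>k. f k < e"
proof -
  have "eventually (\<lambda>k. f k < e) sequentially" by (rule order_tendstoD(2)[OF assms])
  then obtain N where "\<forall>n\<ge>N. f n < e" unfolding eventually_sequentially by blast
  then show ?thesis by blast
qed

lemma lim_ev_gt:
  assumes "f \<longlonglongrightarrow> (l::real)" "e < l" shows "\<exists>k. e < f k"
proof -
  have "eventually (\<lambda>k. e < f k) sequentially" by (rule order_tendstoD(1)[OF assms])
  then obtain N where "\<forall>n\<ge>N. e < f n" unfolding eventually_sequentially by blast
  then show ?thesis by blast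
qed

definition capprox :: "'x::metric_space measure \<Rightarrow> ('x \<Rightarrow> complex) \<Rightarrow> bool" where
  "capprox M f \<longleftrightarrow> (\<forall>e>0. \<exists>h. continuous_on UNIV h \<and> (\<integral>x. cmod (f x - h x) \<partial>M) < e)"

lemma int_tri:
  fixes f g h :: "'a \<Rightarrow> complex"
  assumes "integrable M (\<lambda>x. f x - g x)" "integrable M (\<lambda>x. g x - h x)"
  shows "(\<integral>x. cmod (f x - h x) \<partial>M) \<le> (\<integral>x. cmod (f x - g x) \<partial>M) + (\<integral>x. cmod (g x - h x) \<partial>M)"
proof -
  have i1: "integrable M (\<lambda>x. cmod (f x - g x))" "integrable M (\<lambda>x. cmod (g x - h x))"
    using assms by auto
  have "integrable M (\<lambda>x. (f x - g x) + (g x - h x))" using assms by (rule Bochner_Integration.integrable_add)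
  then have i3: "integrable M (\<lambda>x. cmod (f x - h x))" by simp
  have "(\<integral>x. cmod (f x - h x) \<partial>M) \<le> (\<integral>x. cmod (f x - g x) + cmod (g x - h x) \<partial>M)"
    by (rule integral_mono[OF i3 Bochner_Integration.integrable_add[OF i1]])
       (metis diff_add_cancel add_diff_eq norm_triangle_ineq diff_diff_eq2)
  also have "\<dots> = (\<integral>x. cmod (f x - g x) \<partial>M) + (\<integral>x. cmod (g x - h x) \<partial>M)"
    by (rule Bochner_Integration.integral_add[OF i1])
  finally show ?thesis .
qed

locale cpt =
  fixes M :: "'x::metric_space measure"
  assumes cpt: "compact (UNIV::'x set)" and fin: "finite_measure M" and sb: "sets M = sets borel"
begin

lemma cint: "continuous_on UNIV h \<Longrightarrow> integrable M (h :: 'x \<Rightarrow> 'b::{banach,second_countable_topology})"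
  using cont_integrable[OF cpt fin sb] .

lemma capprox_lim:
  assumes f: "integrable M f" and ex: "\<And>e. e > 0 \<Longrightarrow> \<exists>g. integrable M g \<and> capprox M g \<and> (\<integral>x. cmod (f x - g x) \<partial>M) < e"
  shows "capprox M f"
  unfolding capprox_def
proof (intro allI impI)
  fix e :: real assume e: "e > 0"
  obtain g where g: "integrable M g" "capprox M g" "(\<integral>x. cmod (f x - g x) \<partial>M) < e/2"
    using ex[of "e/2"] e by auto
  obtain h where h: "continuous_on UNIV h" "(\<integral>x. cmod (g x - h x) \<partial>M) < e/2"
    using g(2) e unfolding capprox_def by (meson half_gt_zero)
  have "(\<integral>x. cmod (f x - h x) \<partial>M) \<le> (\<integral>x. cmod (f x - g x) \<partial>M) + (\<integral>x. cmod (g x - h x) \<partial>M)"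
    by (rule int_tri) (use f g(1) cint[OF h(1)] in auto)
  then show "\<exists>h. continuous_on UNIV h \<and> (\<integral>x. cmod (f x - h x) \<partial>M) < e"
    using g(3) h by (intro exI[of _ h]) auto
qed

lemma capprox_add:
  assumes f: "integrable M f" "capprox M f" and g: "integrable M g" "capprox M g"
  shows "capprox M (\<lambda>x. f x + g x)"
  unfolding capprox_def
proof (intro allI impI)
  fix e :: real assume e: "e > 0"
  obtain h1 where h1: "continuous_on UNIV h1" "(\<integral>x. cmod (f x - h1 x) \<partial>M) < e/2"
    using f(2) e unfolding capprox_def by (meson half_gt_zero)
  obtain h2 where h2: "continuous_on UNIV h2" "(\<integral>x. cmod (g x - h2 x) \<partial>M) < e/2"
    using g(2) e unfolding capprox_def by (meson half_gt_zero)
  have i1: "integrable M (\<lambda>x. cmod (f x - h1 x))" "integrable M (\<lambda>x. cmod (g x - h2 x))"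
    using f(1) g(1) cint[OF h1(1)] cint[OF h2(1)] by auto
  have i3: "integrable M (\<lambda>x. cmod (f x + g x - (h1 x + h2 x)))"
    using f(1) g(1) cint[OF h1(1)] cint[OF h2(1)] by auto
  have "(\<integral>x. cmod (f x + g x - (h1 x + h2 x)) \<partial>M) \<le> (\<integral>x. cmod (f x - h1 x) + cmod (g x - h2 x) \<partial>M)"
  proof (rule integral_mono[OF i3 Bochner_Integration.integrable_add[OF i1]])
    fix x
    have "f x + g x - (h1 x + h2 x) = (f x - h1 x) + (g x - h2 x)" by simp
    then show "cmod (f x + g x - (h1 x + h2 x)) \<le> cmod (f x - h1 x) + cmod (g x - h2 x)"
      by (metis norm_triangle_ineq)
  qed
  also have "\<dots> = (\<integral>x. cmod (f x - h1 x) \<partial>M) + (\<integral>x. cmod (g x - h2 x) \<partial>M)"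
    by (rule Bochner_Integration.integral_add[OF i1])
  finally have "(\<integral>x. cmod (f x + g x - (h1 x + h2 x)) \<partial>M) < e" using h1(2) h2(2) by linarith
  moreover have "continuous_on UNIV (\<lambda>x. h1 x + h2 x)" using h1(1) h2(1) by (intro continuous_on_add)
  ultimately show "\<exists>h. continuous_on UNIV h \<and> (\<integral>x. cmod (f x + g x - h x) \<partial>M) < e" by blast
qed

lemma capprox_mult:
  assumes f: "integrable M f" "capprox M f"
  shows "capprox M (\<lambda>x. f x * c)"
  unfolding capprox_def
proof (intro allI impI)
  fix e :: real assume e: "e > 0"
  show "\<exists>h. continuous_on UNIV h \<and> (\<integral>x. cmod (f x * c - h x) \<partial>M) < e"
  proof (cases "c = 0")
    case True
    then show ?thesis using e by (intro exI[of _ "\<lambda>x. 0"]) auto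
  next
    case False
    then have c: "cmod c > 0" by simp
    obtain h1 where h1: "continuous_on UNIV h1" "(\<integral>x. cmod (f x - h1 x) \<partial>M) < e / cmod c"
      using f(2) e c unfolding capprox_def by (meson divide_pos_pos)
    have "(\<integral>x. cmod (f x * c - h1 x * c) \<partial>M) = (\<integral>x. cmod (f x - h1 x) * cmod c \<partial>M)"
      by (rule Bochner_Integration.integral_cong) (auto simp: left_diff_distrib[symmetric] norm_mult)
    also have "\<dots> = (\<integral>x. cmod (f x - h1 x) \<partial>M) * cmod c" by simp
    also have "\<dots> < e" using h1(2) c by (simp add: pos_less_divide_eq)
    finally show ?thesis using h1(1) by (intro exI[of _ "\<lambda>x. h1 x * c"]) (auto intro: continuous_on_mult_right)
  qed
qed

lemma ind_int: "A \<in> sets M \<Longrightarrow> integrable M (\<lambda>x. indicator A x :: complex)"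
  by (rule finite_measure.integrable_const_bound[OF fin, of _ 1]) (auto simp: indicator_def)

end

context cpt begin

lemma space_M: "space M = UNIV" using sb by (metis sets_eq_imp_space_eq space_borel)

lemma capprox_open:
  assumes U: "open U" shows "capprox M (indicator U)"
  unfolding capprox_def
proof (intro allI impI)
  fix e :: real assume e: "e > 0"
  obtain h :: "nat \<Rightarrow> 'x \<Rightarrow> real" where h: "\<And>k. continuous_on UNIV (h k)"
    "\<And>k x. 0 \<le> h k x \<and> h k x \<le> 1" "\<And>x. (\<lambda>k. h k x) \<longlonglongrightarrow> indicator U x"
    using open_approx[OF U] by blast
  have UM: "U \<in> sets M" using U sb by simp
  have lim: "(\<lambda>k. \<integral>x. cmod (indicator U x - complex_of_real (h k x)) \<partial>M) \<longlonglongrightarrow> (\<integral>x. 0 \<partial>M)"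
  proof (rule integral_dominated_convergence[where w="\<lambda>x. 1"])
    show "(\<lambda>x. 0::real) \<in> borel_measurable M" by simp
    show "(\<lambda>x. cmod (indicator U x - complex_of_real (h k x))) \<in> borel_measurable M" for k
      using ind_int[OF UM] cint[OF continuous_on_of_real[OF h(1)[of k]]]
      by (intro borel_measurable_integrable integrable_norm Bochner_Integration.integrable_diff)
    show "integrable M (\<lambda>x. 1::real)" using finite_measure.integrable_const[OF fin] .
    show "AE x in M. (\<lambda>k. cmod (indicator U x - complex_of_real (h k x))) \<longlonglongrightarrow> 0"
    proof (intro AE_I2)
      fix x
      have "(\<lambda>k. complex_of_real (h k x)) \<longlonglongrightarrow> complex_of_real (indicator U x)"
        by (intro tendsto_of_real h(3))
      moreover have "complex_of_real (indicator U x) = indicator U x" by (simp add: indicator_def)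
      ultimately have "(\<lambda>k. indicator U x - complex_of_real (h k x)) \<longlonglongrightarrow> indicator U x - indicator U x"
        by (intro tendsto_diff tendsto_const) simp
      then have "(\<lambda>k. cmod (indicator U x - complex_of_real (h k x))) \<longlonglongrightarrow> cmod (indicator U x - indicator U x)"
        by (rule tendsto_norm)
      then show "(\<lambda>k. cmod (indicator U x - complex_of_real (h k x))) \<longlonglongrightarrow> 0" by simp
    qed
    show "AE x in M. norm (cmod (indicator U x - complex_of_real (h k x))) \<le> 1" for k
    proof (intro AE_I2)
      fix x show "norm (cmod (indicator U x - complex_of_real (h k x))) \<le> 1"
        using h(2)[of k x] norm_of_real[of "1 - h k x", where 'a=complex] by (cases "x \<in> U") (auto simp: indicator_def)
    qed
  qed
  then have "\<exists>k. (\<integral>x. cmod (indicator U x - complex_of_real (h k x)) \<partial>M) < e"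
    by (rule lim_ev_lt) (use e in simp)
  then obtain k where "(\<integral>x. cmod (indicator U x - complex_of_real (h k x)) \<partial>M) < e" by blast
  then show "\<exists>g. continuous_on UNIV g \<and> (\<integral>x. cmod (indicator U x - g x) \<partial>M) < e"
    using continuous_on_of_real[OF h(1)[of k]] by blast
qed

lemma capprox_compl:
  assumes "capprox M (indicator A)" shows "capprox M (indicator (UNIV - A))"
  unfolding capprox_def
proof (intro allI impI)
  fix e :: real assume e: "e > 0"
  obtain h where h: "continuous_on UNIV h" "(\<integral>x. cmod (indicator A x - h x) \<partial>M) < e"
    using assms e unfolding capprox_def by blast
  have "(\<integral>x. cmod (indicator (UNIV - A) x - (1 - h x)) \<partial>M) = (\<integral>x. cmod (indicator A x - h x) \<partial>M)"
  proof (rule Bochner_Integration.integral_cong)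
    fix x show "cmod (indicator (UNIV - A) x - (1 - h x)) = cmod (indicator A x - h x)"
      by (cases "x \<in> A") (auto simp: indicator_def norm_minus_commute)
  qed simp
  moreover have "continuous_on UNIV (\<lambda>x. 1 - h x)" using h(1) by (intro continuous_on_diff continuous_on_const)
  ultimately show "\<exists>g. continuous_on UNIV g \<and> (\<integral>x. cmod (indicator (UNIV - A) x - g x) \<partial>M) < e"
    using h(2) by (intro exI[of _ "\<lambda>x. 1 - h x"]) auto
qed

lemma capprox_zero: "capprox M (\<lambda>x. 0)"
  unfolding capprox_def by (intro allI impI exI[of _ "\<lambda>x. 0"]) auto

lemma capprox_empty: "capprox M (indicator {})"
proof -
  have "indicator {} = (\<lambda>x::'x. 0::complex)" by (rule ext) simp
  then show ?thesis using capprox_zero by simp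
qed

lemma capprox_union:
  fixes A :: "nat \<Rightarrow> 'x set"
  assumes A: "disjoint_family A" "\<And>i. A i \<in> sets M" "\<And>i. capprox M (indicator (A i))"
  shows "capprox M (indicator (\<Union>i. A i))"
proof -
  define B where "B n = (\<Union>i<n. A i)" for n
  have BM: "B n \<in> sets M" for n unfolding B_def using A(2) by auto
  have UM: "(\<Union>i. A i) \<in> sets M" using A(2) by auto
  have capB: "capprox M (indicator (B n))" for n
  proof (induction n)
    case 0 then show ?case using capprox_zero by (simp add: B_def)
  next
    case (Suc n)
    have eq: "indicator (B (Suc n)) = (\<lambda>x. indicator (B n) x + indicator (A n) x :: complex)"
    proof
      fix x
      have "B (Suc n) = B n \<union> A n" by (auto simp: B_def lessThan_Suc)
      moreover have "B n \<inter> A n = {}" using A(1) by (auto simp: B_def disjoint_family_on_def) (metis IntI empty_iff less_irrefl_nat)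
      ultimately show "indicator (B (Suc n)) x = (indicator (B n) x + indicator (A n) x :: complex)"
        by (auto simp: indicator_def)
    qed
    show ?case unfolding eq
      by (rule capprox_add[OF ind_int[OF BM] Suc ind_int[OF A(2)] A(3)])
  qed
  show ?thesis
  proof (rule capprox_lim[OF ind_int[OF UM]])
    fix e :: real assume e: "e > 0"
    have inc: "incseq B" unfolding B_def by (intro incseq_SucI) (auto simp: lessThan_Suc)
    have "(\<lambda>n. measure M (B n)) \<longlonglongrightarrow> measure M (\<Union>n. B n)"
      by (rule finite_measure.finite_Lim_measure_incseq[OF fin]) (use BM inc in auto)
    moreover have UB: "(\<Union>n. B n) = (\<Union>i. A i)" unfolding B_def by auto
    ultimately have lim: "(\<lambda>n. measure M (B n)) \<longlonglongrightarrow> measure M (\<Union>i. A i)" by simp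
    have "\<exists>n. measure M (\<Union>i. A i) - e < measure M (B n)"
      by (rule lim_ev_gt[OF lim]) (use e in linarith)
    then obtain n where n: "measure M (\<Union>i. A i) - e < measure M (B n)" by blast
    have sub: "B n \<subseteq> (\<Union>i. A i)" unfolding B_def by auto
    have "(\<integral>x. cmod (indicator (\<Union>i. A i) x - indicator (B n) x) \<partial>M) = (\<integral>x. indicator ((\<Union>i. A i) - B n) x \<partial>M)"
    proof (rule Bochner_Integration.integral_cong)
      fix x show "cmod (indicator (\<Union>i. A i) x - indicator (B n) x) = (indicator ((\<Union>i. A i) - B n) x :: real)"
        using sub by (auto simp: indicator_def)
    qed simp
    also have "\<dots> = measure M ((\<Union>i. A i) - B n)"
      using Bochner_Integration.integral_indicator[of M "(\<Union>i. A i) - B n"] space_M by simp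
    also have "\<dots> = measure M (\<Union>i. A i) - measure M (B n)"
      by (rule finite_measure.finite_measure_Diff[OF fin UM BM sub])
    finally show "\<exists>g. integrable M g \<and> capprox M g \<and> (\<integral>x. cmod (indicator (\<Union>i. A i) x - g x) \<partial>M) < e"
      using n ind_int[OF BM] capB by (intro exI[of _ "indicator (B n)"]) auto
  qed
qed

lemma capprox_indicator:
  assumes "A \<in> sets M" shows "capprox M (indicator A)"
proof -
  have A': "A \<in> sigma_sets UNIV {S. open S}" using assms by (metis sb sets_borel)
  have I: "Int_stable {S::'x set. open S}" unfolding Int_stable_def by (simp add: open_Int)
  have P: "{S::'x set. open S} \<subseteq> Pow UNIV" by simp
  show ?thesis
  proof (rule sigma_sets_induct_disjoint[where P="\<lambda>A. capprox M (indicator A)", OF I P A'])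
    fix A :: "'x set" assume "A \<in> {S. open S}" then show "capprox M (indicator A)" using capprox_open by simp
  next
    show "capprox M (indicator {})" by (rule capprox_empty)
  next
    fix A :: "'x set" assume "capprox M (indicator A)" then show "capprox M (indicator (UNIV - A))" using capprox_compl by simp
  next
    fix A :: "nat \<Rightarrow> 'x set" assume u: "disjoint_family A" "range A \<subseteq> sigma_sets UNIV {S. open S}" "\<And>i. capprox M (indicator (A i))"
    have "A i \<in> sets M" for i using u(2) by (metis sb sets_borel range_subsetD)
    then show "capprox M (indicator (\<Union>i. A i))" using capprox_union u by blast
  qed
qed

lemma capprox_integrable:
  assumes "integrable M f" shows "capprox M f"
  using assms
proof (induction rule: integrable_induct)
  case (base A c)
  have "(\<lambda>x. indicator A x *\<^sub>R c) = (\<lambda>x. indicator A x * c)"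
    by (auto simp: indicator_def)
  then show ?case using capprox_mult[OF ind_int[OF base(1)] capprox_indicator[OF base(1)]] by simp
next
  case (add f g) then show ?case by (intro capprox_add)
next
  case (lim f s)
  show ?case
  proof (rule capprox_lim[OF lim(4)])
    fix e :: real assume e: "e > 0"
    have "(\<lambda>i. \<integral>x. cmod (f x - s i x) \<partial>M) \<longlonglongrightarrow> (\<integral>x. 0 \<partial>M)"
    proof (rule integral_dominated_convergence[where w="\<lambda>x. 3 * cmod (f x)"])
      show "(\<lambda>x. 0::real) \<in> borel_measurable M" by simp
      show "(\<lambda>x. cmod (f x - s i x)) \<in> borel_measurable M" for i
        using lim(1)[of i] lim(4) by (intro borel_measurable_integrable integrable_norm Bochner_Integration.integrable_diff)
      show "integrable M (\<lambda>x. 3 * cmod (f x))" using lim(4) by auto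
      show "AE x in M. (\<lambda>i. cmod (f x - s i x)) \<longlonglongrightarrow> 0"
      proof (intro AE_I2)
        fix x assume "x \<in> space M"
        then have "(\<lambda>i. f x - s i x) \<longlonglongrightarrow> f x - f x" by (intro tendsto_diff tendsto_const lim(2))
        then have "(\<lambda>i. cmod (f x - s i x)) \<longlonglongrightarrow> cmod (f x - f x)" by (rule tendsto_norm)
        then show "(\<lambda>i. cmod (f x - s i x)) \<longlonglongrightarrow> 0" by simp
      qed
      show "AE x in M. norm (cmod (f x - s i x)) \<le> 3 * cmod (f x)" for i
      proof (intro AE_I2)
        fix x assume x: "x \<in> space M"
        have "cmod (f x - s i x) \<le> cmod (f x) + cmod (s i x)" by (rule norm_triangle_ineq4)
        then show "norm (cmod (f x - s i x)) \<le> 3 * cmod (f x)" using lim(3)[OF x, of i] by simp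
      qed
    qed
    then have "\<exists>i. (\<integral>x. cmod (f x - s i x) \<partial>M) < e"
      by (rule lim_ev_lt) (use e in simp)
    then obtain i where "(\<integral>x. cmod (f x - s i x) \<partial>M) < e" by blast
    then show "\<exists>g. integrable M g \<and> capprox M g \<and> (\<integral>x. cmod (f x - g x) \<partial>M) < e"
      using lim(1,5) by blast
  qed
qed

end


lemma sq_tri: "(cmod (a - c))^2 \<le> 2 * (cmod (a - b))^2 + 2 * (cmod (b - c))^2"
proof -
  have "a - c = (a - b) + (b - c)" by simp
  then have t: "cmod (a - c) \<le> cmod (a - b) + cmod (b - c)" by (metis norm_triangle_ineq)
  have "(cmod (a - c))^2 \<le> (cmod (a - b) + cmod (b - c))^2"
    by (rule power_mono[OF t]) simp
  also have "\<dots> \<le> 2 * (cmod (a - b))^2 + 2 * (cmod (b - c))^2"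
    using sum_squares_bound[of "cmod (a-b)" "cmod (b-c)"] by (simp add: power2_eq_square algebra_simps)
  finally show ?thesis .
qed

lemma sq_tri3: "(cmod (a - d))^2 \<le> 3 * ((cmod (a - b))^2 + (cmod (b - c))^2 + (cmod (c - d))^2)"
proof -
  have "a - d = (a - b) + (b - c) + (c - d)" by simp
  then have "cmod (a - d) \<le> cmod ((a - b) + (b - c)) + cmod (c - d)" by (metis norm_triangle_ineq)
  also have "\<dots> \<le> cmod (a - b) + cmod (b - c) + cmod (c - d)" using norm_triangle_ineq[of "a-b" "b-c"] by linarith
  finally have t: "cmod (a - d) \<le> cmod (a - b) + cmod (b - c) + cmod (c - d)" .
  have "(cmod (a - d))^2 \<le> (cmod (a - b) + cmod (b - c) + cmod (c - d))^2"
    by (rule power_mono[OF t]) simp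
  also have "\<dots> \<le> 3 * ((cmod (a - b))^2 + (cmod (b - c))^2 + (cmod (c - d))^2)"
  proof -
    have "\<And>x y z::real. (x + y + z)^2 \<le> 3 * (x^2 + y^2 + z^2)"
    proof -
      fix x y z :: real
      have "0 \<le> (x-y)^2 + (y-z)^2 + (x-z)^2" by simp
      then show "(x + y + z)^2 \<le> 3 * (x^2 + y^2 + z^2)" by (simp add: power2_eq_square algebra_simps)
    qed
    then show ?thesis by blast
  qed
  finally show ?thesis .
qed

lemma L2_diff_int:
  fixes f g :: "'a \<Rightarrow> complex"
  assumes "f \<in> borel_measurable M" "g \<in> borel_measurable M"
    "integrable M (\<lambda>x. (cmod (f x))^2)" "integrable M (\<lambda>x. (cmod (g x))^2)"
  shows "integrable M (\<lambda>x. (cmod (f x - g x))^2)"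
proof (rule Bochner_Integration.integrable_bound[of M "\<lambda>x. 2 * (cmod (f x))^2 + 2 * (cmod (g x))^2"])
  show "integrable M (\<lambda>x. 2 * (cmod (f x))^2 + 2 * (cmod (g x))^2)" using assms(3,4) by auto
  note [measurable] = assms(1,2)
  show "(\<lambda>x. (cmod (f x - g x))^2) \<in> borel_measurable M" by measurable
  show "AE x in M. norm ((cmod (f x - g x))^2) \<le> norm (2 * (cmod (f x))^2 + 2 * (cmod (g x))^2)"
    using sq_tri[of "f _" "g _" 0] by (intro AE_I2) simp
qed

context cpt begin

lemma L2_approx:
  fixes f :: "'x \<Rightarrow> complex"
  assumes fm: "f \<in> borel_measurable M" and f2: "integrable M (\<lambda>x. (cmod (f x))^2)" and e: "e > 0"
  shows "\<exists>h. continuous_on UNIV h \<and> (\<integral>x. (cmod (f x - h x))^2 \<partial>M) < e"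
proof -
  define C where "C k = closest_point (cball (0::complex) (real k))" for k :: nat
  have Cne: "cball (0::complex) (real k) \<noteq> {}" for k by simp
  have Ccont: "continuous_on UNIV (C k)" for k
    unfolding C_def by (rule continuous_on_closest_point[OF convex_cball closed_cball Cne])
  have Cin: "cmod (C k z) \<le> real k" for k z
    using closest_point_in_set[OF closed_cball Cne, of k z] unfolding C_def by simp
  have Clip: "cmod (C k z - C k w) \<le> cmod (z - w)" for k z w
    using closest_point_lipschitz[OF convex_cball closed_cball Cne, of k z w] unfolding C_def by (simp add: dist_norm)
  have Cself: "cmod z \<le> real k \<Longrightarrow> C k z = z" for k z
    unfolding C_def by (rule closest_point_self) simp
  have Cle: "cmod (z - C k z) \<le> cmod z" for k z
  proof -
    have "0 \<in> cball (0::complex) (real k)" by simp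
    from closest_point_le[OF closed_cball this, of z] show ?thesis unfolding C_def by (simp add: dist_norm)
  qed
  have Cm: "(\<lambda>x. C k (f x)) \<in> borel_measurable M" for k
    using measurable_compose[OF fm borel_measurable_continuous_onI[OF Ccont]] by (simp add: comp_def)
  have lim1: "(\<lambda>k. \<integral>x. (cmod (f x - C k (f x)))^2 \<partial>M) \<longlonglongrightarrow> (\<integral>x. 0 \<partial>M)"
  proof (rule integral_dominated_convergence[where w="\<lambda>x. (cmod (f x))^2"])
    show "(\<lambda>x. 0::real) \<in> borel_measurable M" by simp
    show "(\<lambda>x. (cmod (f x - C k (f x)))^2) \<in> borel_measurable M" for k
    proof -
      note [measurable] = fm Cm[of k]
      show ?thesis by measurable
    qed
    show "integrable M (\<lambda>x. (cmod (f x))^2)" by (rule f2)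
    show "AE x in M. (\<lambda>k. (cmod (f x - C k (f x)))^2) \<longlonglongrightarrow> 0"
    proof (intro AE_I2)
      fix x
      obtain N where N: "cmod (f x) \<le> real N" using real_arch_simple by blast
      have "eventually (\<lambda>k. (cmod (f x - C k (f x)))^2 = 0) sequentially"
        unfolding eventually_sequentially
      proof (intro exI allI impI)
        fix k assume "N \<le> k"
        then have "cmod (f x) \<le> real k" using N by linarith
        then show "(cmod (f x - C k (f x)))^2 = 0" using Cself by simp
      qed
      then show "(\<lambda>k. (cmod (f x - C k (f x)))^2) \<longlonglongrightarrow> 0" by (rule tendsto_eventually)
    qed
    show "AE x in M. norm ((cmod (f x - C k (f x)))^2) \<le> (cmod (f x))^2" for k
      using Cle by (intro AE_I2) (simp add: power_mono)
  qed
  have "\<exists>k. (\<integral>x. (cmod (f x - C k (f x)))^2 \<partial>M) < e/4"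
    by (rule lim_ev_lt[OF lim1]) (use e in simp)
  then obtain k where k: "(\<integral>x. (cmod (f x - C k (f x)))^2 \<partial>M) < e/4" by blast
  define g where "g x = C k (f x)" for x
  have gm: "g \<in> borel_measurable M" using Cm unfolding g_def .
  have gb: "cmod (g x) \<le> real k" for x unfolding g_def by (rule Cin)
  have gint: "integrable M g"
    using finite_measure.integrable_const_bound[OF fin AE_I2[OF gb] gm] .
  have gb2: "norm ((cmod (g x))^2) \<le> (real k)^2" for x
    using power_mono[OF gb[of x] norm_ge_zero, of 2] by simp
  have g2m: "(\<lambda>x. (cmod (g x))^2) \<in> borel_measurable M" using gm by measurable
  have g2: "integrable M (\<lambda>x. (cmod (g x))^2)"
    using finite_measure.integrable_const_bound[OF fin AE_I2[OF gb2] g2m] .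
  have "capprox M g" by (rule capprox_integrable[OF gint])
  moreover have pos: "e / (8 * (real k + 1)) > 0" using e by simp
  ultimately obtain h0 where h0: "continuous_on UNIV h0" "(\<integral>x. cmod (g x - h0 x) \<partial>M) < e / (8 * (real k + 1))"
    unfolding capprox_def by blast
  define h where "h x = C k (h0 x)" for x
  have hc: "continuous_on UNIV h" unfolding h_def
    using continuous_on_compose[OF h0(1) continuous_on_subset[OF Ccont]] by (simp add: comp_def)
  have hb: "cmod (h x) \<le> real k" for x unfolding h_def by (rule Cin)
  have gh: "cmod (g x - h x) \<le> cmod (g x - h0 x)" for x
  proof -
    have "C k (g x) = g x" using gb by (intro Cself)
    then show ?thesis using Clip[of k "g x" "h0 x"] unfolding h_def by simp
  qed
  have gh2: "(cmod (g x - h x))^2 \<le> 2 * real k * cmod (g x - h0 x)" for x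
  proof -
    have "cmod (g x - h x) \<le> cmod (g x) + cmod (h x)" by (rule norm_triangle_ineq4)
    then have "cmod (g x - h x) \<le> 2 * real k" using gb[of x] hb[of x] by linarith
    then have "(cmod (g x - h x))^2 \<le> 2 * real k * cmod (g x - h x)"
      by (simp add: power2_eq_square mult_right_mono)
    also have "\<dots> \<le> 2 * real k * cmod (g x - h0 x)" using gh[of x] by (simp add: mult_left_mono)
    finally show ?thesis .
  qed
  have hm: "h \<in> borel_measurable M" using cont_meas[OF sb hc] .
  have h2: "integrable M (\<lambda>x. (cmod (h x))^2)"
    by (rule cint) (use hc in \<open>intro continuous_intros\<close>)
  have igh: "integrable M (\<lambda>x. (cmod (g x - h x))^2)" by (rule L2_diff_int[OF gm hm g2 h2])
  have igh0: "integrable M (\<lambda>x. cmod (g x - h0 x))"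
    using gint cint[OF h0(1)] by auto
  have "(\<integral>x. (cmod (g x - h x))^2 \<partial>M) \<le> (\<integral>x. 2 * real k * cmod (g x - h0 x) \<partial>M)"
    by (rule integral_mono[OF igh]) (use igh0 gh2 in auto)
  also have "\<dots> = 2 * real k * (\<integral>x. cmod (g x - h0 x) \<partial>M)" by simp
  also have "\<dots> \<le> 2 * real k * (e / (8 * (real k + 1)))"
    using h0(2) by (intro mult_left_mono) auto
  also have "\<dots> \<le> e / 4" using e by (simp add: field_simps)
  finally have step2: "(\<integral>x. (cmod (g x - h x))^2 \<partial>M) \<le> e/4" .
  have ifg: "integrable M (\<lambda>x. (cmod (f x - g x))^2)" by (rule L2_diff_int[OF fm gm f2 g2])
  have ifh: "integrable M (\<lambda>x. (cmod (f x - h x))^2)" by (rule L2_diff_int[OF fm hm f2 h2])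
  have "(\<integral>x. (cmod (f x - h x))^2 \<partial>M) \<le> (\<integral>x. 2 * (cmod (f x - g x))^2 + 2 * (cmod (g x - h x))^2 \<partial>M)"
    by (rule integral_mono[OF ifh]) (use ifg igh sq_tri in auto)
  also have "\<dots> = 2 * (\<integral>x. (cmod (f x - g x))^2 \<partial>M) + 2 * (\<integral>x. (cmod (g x - h x))^2 \<partial>M)"
    using ifg igh by simp
  also have "\<dots> < e" using k step2 unfolding g_def by simp
  finally show ?thesis using hc by blast
qed

end


lemma L2_int:
  fixes f :: "'a \<Rightarrow> complex"
  assumes "finite_measure M" "f \<in> borel_measurable M" "integrable M (\<lambda>x. (cmod (f x))^2)"
  shows "integrable M f"
proof (rule Bochner_Integration.integrable_bound[of M "\<lambda>x. 1 + (cmod (f x))^2"])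
  show "integrable M (\<lambda>x. 1 + (cmod (f x))^2)"
    using assms finite_measure.integrable_const[OF assms(1)] by (intro Bochner_Integration.integrable_add) auto
  show "f \<in> borel_measurable M" by fact
  show "AE x in M. norm (f x) \<le> norm (1 + (cmod (f x))^2)"
  proof (intro AE_I2)
    fix x
    have a: "0 \<le> (cmod (f x) - 1)^2" by simp
    have b: "(cmod (f x) - 1)^2 = (cmod (f x))^2 - 2 * cmod (f x) + 1" by (simp add: power2_eq_square algebra_simps)
    have "cmod (f x) \<le> 1 + (cmod (f x))^2" using a b norm_ge_zero[of "f x"] by linarith
    then show "norm (f x) \<le> norm (1 + (cmod (f x))^2)" by simp
  qed
qed

lemma cmod_shift: "(cmod (z - c))^2 = (cmod z)^2 - 2 * Re (cnj c * z) + (cmod c)^2"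
  unfolding cmod_power2 by (simp add: power2_eq_square algebra_simps)

lemma L2_shift:
  fixes f :: "'a \<Rightarrow> complex"
  assumes P: "prob_space P" and fm: "f \<in> borel_measurable P" and f2: "integrable P (\<lambda>x. (cmod (f x))^2)"
  shows "(\<integral>x. (cmod (f x - c))^2 \<partial>P) = (\<integral>x. (cmod (f x))^2 \<partial>P) - 2 * Re (cnj c * (\<integral>x. f x \<partial>P)) + (cmod c)^2"
proof -
  have fi: "integrable P f" using L2_int[OF prob_space.finite_measure[OF P] fm f2] .
  have i1: "integrable P (\<lambda>x. 2 * Re (cnj c * f x))" using fi by auto
  have "(\<integral>x. (cmod (f x - c))^2 \<partial>P) = (\<integral>x. (cmod (f x))^2 - 2 * Re (cnj c * f x) + (cmod c)^2 \<partial>P)"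
    by (simp add: cmod_shift)
  also have "\<dots> = (\<integral>x. (cmod (f x))^2 - 2 * Re (cnj c * f x) \<partial>P) + (\<integral>x. (cmod c)^2 \<partial>P)"
    using f2 i1 finite_measure.integrable_const[OF prob_space.finite_measure[OF P]] by (intro Bochner_Integration.integral_add) auto
  also have "(\<integral>x. (cmod (f x))^2 - 2 * Re (cnj c * f x) \<partial>P) = (\<integral>x. (cmod (f x))^2 \<partial>P) - (\<integral>x. 2 * Re (cnj c * f x) \<partial>P)"
    using f2 i1 by (rule Bochner_Integration.integral_diff)
  also have "(\<integral>x. 2 * Re (cnj c * f x) \<partial>P) = 2 * Re (cnj c * (\<integral>x. f x \<partial>P))"
  proof -
    have "(\<integral>x. Re (cnj c * f x) \<partial>P) = Re (\<integral>x. cnj c * f x \<partial>P)" using fi by (intro integral_Re) auto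
    also have "\<dots> = Re (cnj c * (\<integral>x. f x \<partial>P))" by (simp only: integral_mult_right_zero)
    finally have e1: "(\<integral>x. Re (cnj c * f x) \<partial>P) = Re (cnj c * (\<integral>x. f x \<partial>P))" .
    have "(\<integral>x. 2 * Re (cnj c * f x) \<partial>P) = 2 * (\<integral>x. Re (cnj c * f x) \<partial>P)" by (rule integral_mult_right_zero)
    then show ?thesis using e1 by (simp only:)
  qed
  also have "(\<integral>x. (cmod c)^2 \<partial>P) = (cmod c)^2" using prob_space.prob_space[OF P] by simp
  finally show ?thesis .
qed

lemma act_cont:
  assumes "continuous_action act" shows "continuous_on UNIV (act g)"
proof -
  have c: "continuous_on UNIV (\<lambda>p. act (fst p) (snd p))"
    using assms unfolding continuous_action_def by (simp add: case_prod_beta')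
  have "continuous_on UNIV (\<lambda>x. act (fst (g, x)) (snd (g, x)))"
    by (rule continuous_on_compose2[OF c]) (auto intro: continuous_intros)
  then show ?thesis by simp
qed

lemma Phi_cont:
  fixes act :: "'g::topological_group_add \<Rightarrow> 'x::topological_space \<Rightarrow> 'x" and h :: "'x \<Rightarrow> complex"
  assumes "continuous_action act" "continuous_on UNIV h"
  shows "continuous_on UNIV (\<lambda>p. (cmod (h (act (- fst p) (snd p)) - h (snd p)))^2)"
proof -
  have c: "continuous_on UNIV (\<lambda>p. act (fst p) (snd p))"
    using assms unfolding continuous_action_def by (simp add: case_prod_beta')
  have c2: "continuous_on UNIV (\<lambda>p::'g\<times>'x. act (fst (- fst p, snd p)) (snd (- fst p, snd p)))"
    by (rule continuous_on_compose2[OF c]) (auto intro!: continuous_on_Pair continuous_on_minus continuous_on_fst continuous_on_snd continuous_on_id)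
  have c3: "continuous_on UNIV (\<lambda>p::'g\<times>'x. h (act (- fst p) (snd p)))"
    by (rule continuous_on_compose2[OF assms(2) c2[simplified]]) auto
  have c4: "continuous_on UNIV (\<lambda>p::'g\<times>'x. h (snd p))"
    by (rule continuous_on_compose2[OF assms(2)]) (auto intro: continuous_intros)
  show ?thesis using c3 c4 by (intro continuous_intros)
qed

lemma inv_distr:
  assumes "borel_prob M" "invariant_measure act M" "continuous_action act"
  shows "distr M borel (act g) = M"
proof (rule measure_eqI)
  have sb: "sets M = sets borel" using assms(1) unfolding borel_prob_def by simp
  show "sets (distr M borel (act g)) = sets M" using sb by simp
  fix A assume "A \<in> sets (distr M borel (act g))"
  then have A: "A \<in> sets borel" by simp
  have m: "act g \<in> measurable M borel"
    using cont_meas[OF sb act_cont[OF assms(3)]] .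
  have "emeasure (distr M borel (act g)) A = emeasure M (act g -` A \<inter> space M)"
    by (rule emeasure_distr[OF m A])
  also have "\<dots> = emeasure M A" using assms(2) A sb unfolding invariant_measure_def by simp
  finally show "emeasure (distr M borel (act g)) A = emeasure M A" .
qed

lemma tube:
  fixes \<Phi> :: "'g::topological_space \<times> 'x::topological_space \<Rightarrow> real"
  assumes "compact (UNIV::'x set)" "continuous_on UNIV \<Phi>" "\<eta> > 0"
  shows "\<exists>U. open U \<and> g0 \<in> U \<and> (\<forall>g\<in>U. \<forall>x. \<bar>\<Phi> (g, x) - \<Phi> (g0, x)\<bar> < \<eta>)"
proof -
  define W where "W = (\<lambda>p. \<bar>\<Phi> p - \<Phi> (g0, snd p)\<bar>) -` {..<\<eta>}"
  have cW: "continuous_on UNIV (\<lambda>p. \<bar>\<Phi> p - \<Phi> (g0, snd p)\<bar>)"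
  proof -
    have "continuous_on UNIV (\<lambda>p::'g\<times>'x. \<Phi> (g0, snd p))"
      by (rule continuous_on_compose2[OF assms(2)]) (auto intro!: continuous_on_Pair continuous_on_const continuous_on_snd continuous_on_id)
    then show ?thesis using assms(2) by (intro continuous_intros)
  qed
  have "open W" unfolding W_def by (rule open_vimage[OF open_lessThan cW])
  then have oW: "openin (prod_topology euclidean euclidean) W" by simp
  have "compactin euclidean (UNIV::'x set)" using assms(1) by (simp add: compactin_euclidean_iff)
  moreover have "{g0} \<times> UNIV \<subseteq> W" unfolding W_def using assms(3) by auto
  ultimately obtain U V where UV: "openin euclidean U" "openin euclidean V" "g0 \<in> U" "UNIV \<subseteq> V" "U \<times> V \<subseteq> W"
    using tube_lemma_right[OF oW] by (metis topspace_euclidean UNIV_I)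
  show ?thesis
  proof (intro exI conjI ballI allI)
    show "open U" using UV(1) by simp
    show "g0 \<in> U" by fact
    fix g x assume "g \<in> U"
    then have "(g, x) \<in> W" using UV(4,5) by auto
    then show "\<bar>\<Phi> (g, x) - \<Phi> (g0, x)\<bar> < \<eta>" unfolding W_def by simp
  qed
qed


lemma re_cnj_self: "Re (cnj z * z) = (cmod z)^2"
  unfolding cmod_power2 by (simp add: power2_eq_square)

lemma sqrt_lt_sq: assumes "0 \<le> a" "sqrt a < b" shows "a < b^2"
proof -
  have "0 \<le> sqrt a" using assms by simp
  then have "(sqrt a)^2 < b^2" using assms(2) by (intro power_strict_mono) auto
  then show ?thesis using assms(1) by simp
qed

lemma lt_sq_sqrt: assumes "0 \<le> a" "a < b^2" "0 < b" shows "sqrt a < b"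
proof -
  have "sqrt a < sqrt (b^2)" using assms by (intro real_sqrt_less_mono) auto
  then show ?thesis using assms(3) by simp
qed

lemma single_sums: "(\<lambda>n. if n = N then c else (0::real)) sums c"
  using sums_single[of N "\<lambda>_. c"] by simp

theorem proposition2p1:
  fixes act :: "'g::{topological_group_add, t2_space, second_countable_topology} \<Rightarrow> 'x::metric_space \<Rightarrow> 'x"
    and \<mu>s :: "nat \<Rightarrow> 'x measure"
    and \<mu> :: "'x measure"
  assumes "locally_compact_space (euclidean :: 'g topology)"
    and "compactly_generated TYPE('g)"
    and "compact (UNIV :: 'x set)"
    and "continuous_action act"
    and "\<And>n. borel_prob (\<mu>s n)"
    and "\<And>n. invariant_measure act (\<mu>s n)"
    and "uniform_spectral_gap act \<mu>s"
    and "borel_prob \<mu>"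
    and "weak_star_converges \<mu>s \<mu>"
  shows "spectral_gap act \<mu>"
proof -
  have sbn: "\<And>n. sets (\<mu>s n) = sets borel" and psn: "\<And>n. prob_space (\<mu>s n)"
    using assms(5) unfolding borel_prob_def by auto
  have sb: "sets \<mu> = sets borel" and ps: "prob_space \<mu>"
    using assms(8) unfolding borel_prob_def by auto
  have cptn: "cpt (\<mu>s n)" for n
    by (rule cpt.intro[OF assms(3) prob_space.finite_measure[OF psn] sbn])
  have cptm: "cpt \<mu>"
    by (rule cpt.intro[OF assms(3) prob_space.finite_measure[OF ps] sb])
  have actc: "continuous_on UNIV (act g)" for g by (rule act_cont[OF assms(4)])
  have actm: "sets N = sets borel \<Longrightarrow> act g \<in> measurable N borel" for g and N :: "'x measure"
    by (rule cont_meas[OF _ actc])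
  have wk: "continuous_on UNIV \<phi> \<Longrightarrow> (\<lambda>n. \<integral>x. \<phi> x \<partial>\<mu>s n) \<longlonglongrightarrow> (\<integral>x. \<phi> x \<partial>\<mu>)" for \<phi> :: "'x \<Rightarrow> real"
    using assms(9) unfolding weak_star_converges_def by blast
  have invn: "distr (\<mu>s n) borel (act g) = \<mu>s n" for n g
    by (rule inv_distr[OF assms(5) assms(6) assms(4)])
  have inv: "distr \<mu> borel (act g) = \<mu>" for g
  proof (rule measure_eq_cont)
    show "finite_measure (distr \<mu> borel (act g))"
      by (rule prob_space.finite_measure[OF prob_space.prob_space_distr[OF ps actm[OF sb]]])
    show "sets (distr \<mu> borel (act g)) = sets borel" by simp
    show "finite_measure \<mu>" by (rule prob_space.finite_measure[OF ps])
    show "sets \<mu> = sets borel" by (rule sb)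
    fix \<phi> :: "'x \<Rightarrow> real" assume \<phi>: "continuous_on UNIV \<phi>" "\<forall>x. 0 \<le> \<phi> x \<and> \<phi> x \<le> 1"
    have \<phi>m: "\<phi> \<in> borel_measurable borel" using borel_measurable_continuous_onI[OF \<phi>(1)] .
    have c2: "continuous_on UNIV (\<lambda>x. \<phi> (act g x))"
      by (rule continuous_on_compose2[OF \<phi>(1) actc]) auto
    have 1: "(\<lambda>n. \<integral>x. \<phi> (act g x) \<partial>\<mu>s n) \<longlonglongrightarrow> (\<integral>x. \<phi> (act g x) \<partial>\<mu>)" by (rule wk[OF c2])
    have e: "(\<integral>x. \<phi> (act g x) \<partial>\<mu>s n) = (\<integral>x. \<phi> x \<partial>\<mu>s n)" for n
      using integral_distr[OF actm[OF sbn[of n], of g] \<phi>m] invn[of n g] by simp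
    have 2: "(\<lambda>n. \<integral>x. \<phi> (act g x) \<partial>\<mu>s n) \<longlonglongrightarrow> (\<integral>x. \<phi> x \<partial>\<mu>)"
      using wk[OF \<phi>(1)] unfolding e .
    have "(\<integral>x. \<phi> (act g x) \<partial>\<mu>) = (\<integral>x. \<phi> x \<partial>\<mu>)" using LIMSEQ_unique[OF 1 2] .
    then show "(\<integral>x. \<phi> x \<partial>distr \<mu> borel (act g)) = (\<integral>x. \<phi> x \<partial>\<mu>)"
      using integral_distr[OF actm[OF sb] \<phi>m] by simp
  qed
  have invint: "integrable \<mu> (\<lambda>x. \<phi> (act g x)) \<and> (\<integral>x. \<phi> (act g x) \<partial>\<mu>) = (\<integral>x. \<phi> x \<partial>\<mu>)"
    if \<phi>m: "\<phi> \<in> borel_measurable borel" and \<phi>i: "integrable \<mu> \<phi>" for g and \<phi> :: "'x \<Rightarrow> real"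
  proof
    show "integrable \<mu> (\<lambda>x. \<phi> (act g x))"
      using integrable_distr_eq[OF actm[OF sb, of g] \<phi>m] inv[of g] \<phi>i by simp
    show "(\<integral>x. \<phi> (act g x) \<partial>\<mu>) = (\<integral>x. \<phi> x \<partial>\<mu>)"
      using integral_distr[OF actm[OF sb, of g] \<phi>m] inv[of g] by simp
  qed
  have mconv: "F \<in> borel_measurable borel" if "F \<in> borel_measurable \<mu>" for F :: "'x \<Rightarrow> complex"
    using that unfolding measurable_cong_sets[OF sb refl, where N=borel] .
  show ?thesis unfolding spectral_gap_def
  proof
    assume ai: "almost_inv_L2_0 act \<mu>"
    have "almost_inv_direct_sum act \<mu>s" unfolding almost_inv_direct_sum_def
    proof (intro allI impI)
      fix Q :: "'g set" and \<epsilon> :: real assume \<epsilon>: "\<epsilon> > 0" and Q: "compact Q"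
      define \<eta> where "\<eta> = \<epsilon>^2 / 100"
      have \<eta>: "\<eta> > 0" using \<epsilon> unfolding \<eta>_def by simp
      have e10: "\<epsilon> / 10 > 0" using \<epsilon> by simp
      obtain f where f: "L2_0 \<mu> f" "L2_norm_sq \<mu> f = 1"
          "\<forall>g\<in>Q. sqrt (L2_norm_sq \<mu> (\<lambda>x. koopman act g f x - f x)) < \<epsilon> / 10"
        using ai[unfolded almost_inv_L2_0_def, rule_format, OF e10 Q] by blast
      have fm: "f \<in> borel_measurable \<mu>" and f2: "integrable \<mu> (\<lambda>x. (cmod (f x))^2)"
        and f0: "(\<integral>x. f x \<partial>\<mu>) = 0" using f(1) unfolding L2_0_def by auto
      have fn1: "(\<integral>x. (cmod (f x))^2 \<partial>\<mu>) = 1" using f(2) unfolding L2_norm_sq_def .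
      have fmb: "f \<in> borel_measurable borel" by (rule mconv[OF fm])
      have fQ: "(\<integral>x. (cmod (f (act (- g) x) - f x))^2 \<partial>\<mu>) < \<eta>" if g: "g \<in> Q" for g
      proof -
        have "sqrt (\<integral>x. (cmod (f (act (- g) x) - f x))^2 \<partial>\<mu>) < \<epsilon> / 10"
          using f(3) g unfolding L2_norm_sq_def koopman_def by blast
        then have "(\<integral>x. (cmod (f (act (- g) x) - f x))^2 \<partial>\<mu>) < (\<epsilon> / 10)^2"
          by (intro sqrt_lt_sq) auto
        then show ?thesis unfolding \<eta>_def by (simp add: power_divide)
      qed
      define \<delta> where "\<delta> = min (1/8) \<eta>"
      have \<delta>: "\<delta> > 0" "\<delta> \<le> 1/8" "\<delta> \<le> \<eta>" using \<eta> unfolding \<delta>_def by auto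
      obtain h where hc: "continuous_on UNIV h" and fh: "(\<integral>x. (cmod (f x - h x))^2 \<partial>\<mu>) < \<delta>"
        using cpt.L2_approx[OF cptm fm f2 \<delta>(1)] by blast
      have hmb: "h \<in> borel_measurable borel" by (rule borel_measurable_continuous_onI[OF hc])
      have hm: "h \<in> borel_measurable \<mu>" by (rule cont_meas[OF sb hc])
      have h2c: "continuous_on UNIV (\<lambda>x. (cmod (h x))^2)" using hc by (intro continuous_intros)
      have h2: "integrable \<mu> (\<lambda>x. (cmod (h x))^2)" by (rule cpt.cint[OF cptm h2c])
      have fhi: "integrable \<mu> (\<lambda>x. (cmod (f x - h x))^2)" by (rule L2_diff_int[OF fm hm f2 h2])
      have Fmu: "(\<integral>x. (cmod (h (act (- g) x) - h x))^2 \<partial>\<mu>) < 9 * \<eta>" if g: "g \<in> Q" for g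
      proof -
        have Tm: "act (- g) \<in> measurable \<mu> borel" by (rule actm[OF sb])
        have \<phi>1m: "(\<lambda>y. (cmod (h y - f y))^2) \<in> borel_measurable borel" using fmb hmb by measurable
        have \<phi>1i: "integrable \<mu> (\<lambda>y. (cmod (h y - f y))^2)" using fhi by (simp add: norm_minus_commute)
        note a1 = invint[OF \<phi>1m \<phi>1i, of "- g"]
        have \<phi>2m: "(\<lambda>y. (cmod (f y))^2) \<in> borel_measurable borel" using fmb by measurable
        note a2 = invint[OF \<phi>2m f2, of "- g"]
        have fTm: "(\<lambda>x. f (act (- g) x)) \<in> borel_measurable \<mu>" using measurable_compose[OF Tm fmb] .
        have bi: "integrable \<mu> (\<lambda>x. (cmod (f (act (- g) x) - f x))^2)"
          by (rule L2_diff_int[OF fTm fm conjunct1[OF a2] f2])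
        have hTc: "continuous_on UNIV (\<lambda>x. h (act (- g) x))"
          by (rule continuous_on_compose2[OF hc actc]) auto
        have lc: "continuous_on UNIV (\<lambda>x. (cmod (h (act (- g) x) - h x))^2)"
          using hTc hc by (intro continuous_intros)
        have li: "integrable \<mu> (\<lambda>x. (cmod (h (act (- g) x) - h x))^2)" by (rule cpt.cint[OF cptm lc])
        have ri: "integrable \<mu> (\<lambda>x. 3 * ((cmod (h (act (- g) x) - f (act (- g) x)))^2 + (cmod (f (act (- g) x) - f x))^2 + (cmod (f x - h x))^2))"
          using conjunct1[OF a1] bi fhi by auto
        have "(\<integral>x. (cmod (h (act (- g) x) - h x))^2 \<partial>\<mu>) \<le>
            (\<integral>x. 3 * ((cmod (h (act (- g) x) - f (act (- g) x)))^2 + (cmod (f (act (- g) x) - f x))^2 + (cmod (f x - h x))^2) \<partial>\<mu>)"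
          by (rule integral_mono[OF li ri]) (rule sq_tri3)
        also have "\<dots> = 3 * ((\<integral>x. (cmod (h (act (- g) x) - f (act (- g) x)))^2 \<partial>\<mu>) + (\<integral>x. (cmod (f (act (- g) x) - f x))^2 \<partial>\<mu>) + (\<integral>x. (cmod (f x - h x))^2 \<partial>\<mu>))"
          using conjunct1[OF a1] bi fhi by simp
        also have "(\<integral>x. (cmod (h (act (- g) x) - f (act (- g) x)))^2 \<partial>\<mu>) = (\<integral>x. (cmod (f x - h x))^2 \<partial>\<mu>)"
          using conjunct2[OF a1] by (simp add: norm_minus_commute)
        finally show ?thesis using fh fQ[OF g] \<delta> by (simp add: algebra_simps)
      qed
      define m where "m n = (\<integral>x. h x \<partial>\<mu>s n)" for n
      define m0 where "m0 = (\<integral>x. h x \<partial>\<mu>)"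
      have hin: "integrable (\<mu>s n) h" for n by (rule cpt.cint[OF cptn hc])
      have hi: "integrable \<mu> h" by (rule cpt.cint[OF cptm hc])
      have conv_m: "m \<longlonglongrightarrow> m0"
      proof (subst tendsto_complex_iff, intro conjI)
        have "(\<lambda>n. \<integral>x. Re (h x) \<partial>\<mu>s n) \<longlonglongrightarrow> (\<integral>x. Re (h x) \<partial>\<mu>)"
          by (rule wk) (use hc in \<open>intro continuous_intros\<close>)
        then show "(\<lambda>n. Re (m n)) \<longlonglongrightarrow> Re m0"
          unfolding m_def m0_def using hin hi by simp
        have "(\<lambda>n. \<integral>x. Im (h x) \<partial>\<mu>s n) \<longlonglongrightarrow> (\<integral>x. Im (h x) \<partial>\<mu>)"
          by (rule wk) (use hc in \<open>intro continuous_intros\<close>)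
        then show "(\<lambda>n. Im (m n)) \<longlonglongrightarrow> Im m0"
          unfolding m_def m0_def using hin hi by simp
      qed
      define Nn where "Nn n = (\<integral>x. (cmod (h x - m n))^2 \<partial>\<mu>s n)" for n
      define V where "V = (\<integral>x. (cmod (h x - m0))^2 \<partial>\<mu>)"
      have hmn: "h \<in> borel_measurable (\<mu>s n)" for n by (rule cont_meas[OF sbn hc])
      have h2n: "integrable (\<mu>s n) (\<lambda>x. (cmod (h x))^2)" for n by (rule cpt.cint[OF cptn h2c])
      have Nn_eq: "Nn n = (\<integral>x. (cmod (h x))^2 \<partial>\<mu>s n) - (cmod (m n))^2" for n
        unfolding Nn_def using L2_shift[OF psn hmn h2n, of n "m n"] re_cnj_self[of "m n"] unfolding m_def by simp
      have V_eq: "V = (\<integral>x. (cmod (h x))^2 \<partial>\<mu>) - (cmod m0)^2"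
        unfolding V_def using L2_shift[OF ps hm h2, of m0] re_cnj_self[of m0] unfolding m0_def by simp
      have conv_N: "Nn \<longlonglongrightarrow> V"
        unfolding Nn_eq V_eq by (intro tendsto_diff wk[OF h2c] tendsto_power tendsto_norm conv_m)
      have V: "V \<ge> 3/8"
      proof -
        have c1: "(\<integral>x. (cmod (f x - m0))^2 \<partial>\<mu>) = 1 + (cmod m0)^2"
          using L2_shift[OF ps fm f2, of m0] f0 fn1 by simp
        have cm: "(\<lambda>x. m0) \<in> borel_measurable \<mu>" by simp
        have c2i: "integrable \<mu> (\<lambda>x. (cmod m0)^2)"
          by (rule finite_measure.integrable_const[OF prob_space.finite_measure[OF ps]])
        have i1: "integrable \<mu> (\<lambda>x. (cmod (f x - m0))^2)" by (rule L2_diff_int[OF fm cm f2 c2i])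
        have i2: "integrable \<mu> (\<lambda>x. (cmod (h x - m0))^2)" by (rule L2_diff_int[OF hm cm h2 c2i])
        have "(\<integral>x. (cmod (f x - m0))^2 \<partial>\<mu>) \<le> (\<integral>x. 2 * (cmod (f x - h x))^2 + 2 * (cmod (h x - m0))^2 \<partial>\<mu>)"
          by (rule integral_mono[OF i1]) (use fhi i2 sq_tri in auto)
        also have "\<dots> = 2 * (\<integral>x. (cmod (f x - h x))^2 \<partial>\<mu>) + 2 * V"
          unfolding V_def using fhi i2 by simp
        finally have "(\<integral>x. (cmod (f x - m0))^2 \<partial>\<mu>) \<le> 2 * (\<integral>x. (cmod (f x - h x))^2 \<partial>\<mu>) + 2 * V" .
        moreover have "0 \<le> (cmod m0)^2" by simp
        ultimately show ?thesis using c1 fh \<delta> by linarith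
      qed
      have ev1: "eventually (\<lambda>n. Nn n > 1/4) sequentially"
        by (rule order_tendstoD(1)[OF conv_N]) (use V in linarith)
      define \<Phi> where "\<Phi> p = (cmod (h (act (- fst p) (snd p)) - h (snd p)))^2" for p :: "'g \<times> 'x"
      have \<Phi>c: "continuous_on UNIV \<Phi>" unfolding \<Phi>_def by (rule Phi_cont[OF assms(4) hc])
      have "\<forall>g0. \<exists>U. open U \<and> g0 \<in> U \<and> (\<forall>g\<in>U. \<forall>x. \<bar>\<Phi> (g, x) - \<Phi> (g0, x)\<bar> < \<eta>)"
        using tube[OF assms(3) \<Phi>c \<eta>] by blast
      then obtain Uf where Uf: "\<forall>g0. open (Uf g0) \<and> g0 \<in> Uf g0 \<and> (\<forall>g\<in>Uf g0. \<forall>x. \<bar>\<Phi> (g, x) - \<Phi> (g0, x)\<bar> < \<eta>)"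
        using choice[of "\<lambda>g0 U. open U \<and> g0 \<in> U \<and> (\<forall>g\<in>U. \<forall>x. \<bar>\<Phi> (g, x) - \<Phi> (g0, x)\<bar> < \<eta>)"] by blast
      obtain T0 where T0: "T0 \<subseteq> Q" "finite T0" "Q \<subseteq> \<Union> (Uf ` T0)"
      proof (rule compactE_image[OF Q, of Q Uf])
        show "\<And>T. T \<in> Q \<Longrightarrow> open (Uf T)" using Uf by blast
        show "Q \<subseteq> \<Union> (Uf ` Q)" using Uf by blast
      qed blast
      have \<Phi>x: "continuous_on UNIV (\<lambda>x. \<Phi> (g, x))" for g
        by (rule continuous_on_compose2[OF \<Phi>c]) (auto intro!: continuous_on_Pair continuous_on_const continuous_on_id)
      have ev2: "eventually (\<lambda>n. \<forall>g0\<in>T0. (\<integral>x. \<Phi> (g0, x) \<partial>\<mu>s n) < 9 * \<eta>) sequentially"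
      proof (rule eventually_ball_finite[OF T0(2)], intro ballI)
        fix g0 assume "g0 \<in> T0"
        then have "(\<integral>x. \<Phi> (g0, x) \<partial>\<mu>) < 9 * \<eta>" using Fmu T0(1) unfolding \<Phi>_def by auto
        then show "eventually (\<lambda>n. (\<integral>x. \<Phi> (g0, x) \<partial>\<mu>s n) < 9 * \<eta>) sequentially"
          by (rule order_tendstoD(2)[OF wk[OF \<Phi>x]])
      qed
      obtain N where N1: "Nn N > 1/4" and N2: "\<forall>g0\<in>T0. (\<integral>x. \<Phi> (g0, x) \<partial>\<mu>s N) < 9 * \<eta>"
        using eventually_happens'[OF _ eventually_conj[OF ev1 ev2]] by auto
      have FQ: "(\<integral>x. \<Phi> (g, x) \<partial>\<mu>s N) < 10 * \<eta>" if g: "g \<in> Q" for g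
      proof -
        obtain g0 where g0: "g0 \<in> T0" "g \<in> Uf g0" using T0(3) g by blast
        have cl: "\<Phi> (g, x) \<le> \<Phi> (g0, x) + \<eta>" for x
        proof -
          have "\<bar>\<Phi> (g, x) - \<Phi> (g0, x)\<bar> < \<eta>" using Uf g0(2) by blast
          then show ?thesis by linarith
        qed
        have "(\<integral>x. \<Phi> (g, x) \<partial>\<mu>s N) \<le> (\<integral>x. \<Phi> (g0, x) + \<eta> \<partial>\<mu>s N)"
          by (rule integral_mono[OF cpt.cint[OF cptn \<Phi>x] Bochner_Integration.integrable_add[OF cpt.cint[OF cptn \<Phi>x] finite_measure.integrable_const[OF prob_space.finite_measure[OF psn]]] cl])
        also have "\<dots> = (\<integral>x. \<Phi> (g0, x) \<partial>\<mu>s N) + (\<integral>x. \<eta> \<partial>\<mu>s N)"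
          by (rule Bochner_Integration.integral_add[OF cpt.cint[OF cptn \<Phi>x] finite_measure.integrable_const[OF prob_space.finite_measure[OF psn]]])
        also have "(\<integral>x. \<eta> \<partial>\<mu>s N) = \<eta>" using prob_space.prob_space[OF psn[of N]] by simp
        finally show ?thesis using N2 g0(1) by fastforce
      qed
      show "\<exists>f. (\<forall>n. L2_0 (\<mu>s n) (f n)) \<and> (\<lambda>n. L2_norm_sq (\<mu>s n) (f n)) sums 1 \<and>
             (\<forall>g\<in>Q. summable (\<lambda>n. L2_norm_sq (\<mu>s n) (\<lambda>x. koopman act g (f n) x - f n x)) \<and>
                     sqrt (\<Sum>n. L2_norm_sq (\<mu>s n) (\<lambda>x. koopman act g (f n) x - f n x)) < \<epsilon>)"
      proof -
        have Npos: "Nn N > 0" using N1 by linarith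
        define s where "s = sqrt (Nn N)"
        have s: "s > 0" "s^2 = Nn N" using Npos by (auto simp: s_def)
        have s0: "complex_of_real s \<noteq> 0" using s by simp
        define F where "F x = (h x - m N) / complex_of_real s" for x
        define fs where "fs n = (if n = N then F else (\<lambda>x. 0))" for n
        have Fc: "continuous_on UNIV F" unfolding F_def using hc s0
          by (intro continuous_on_divide continuous_on_diff continuous_on_const) auto
        have zL2: "L2_0 (\<mu>s n) (\<lambda>x. 0)" for n unfolding L2_0_def by simp
        have zN: "L2_norm_sq (\<mu>s n) (\<lambda>x. 0) = 0" for n unfolding L2_norm_sq_def by simp
        have FL2: "L2_0 (\<mu>s N) F"
          unfolding L2_0_def
        proof (intro conjI)
          show "F \<in> borel_measurable (\<mu>s N)" by (rule cont_meas[OF sbn Fc])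
          show "integrable (\<mu>s N) (\<lambda>x. (cmod (F x))^2)"
            by (rule cpt.cint[OF cptn]) (use Fc in \<open>intro continuous_intros\<close>)
          have "(\<integral>x. F x \<partial>\<mu>s N) = (\<integral>x. h x - m N \<partial>\<mu>s N) / complex_of_real s"
            unfolding F_def by (rule integral_divide_zero)
          also have "(\<integral>x. h x - m N \<partial>\<mu>s N) = (\<integral>x. h x \<partial>\<mu>s N) - (\<integral>x. m N \<partial>\<mu>s N)"
            by (rule Bochner_Integration.integral_diff[OF hin finite_measure.integrable_const[OF prob_space.finite_measure[OF psn]]])
          also have "(\<integral>x. m N \<partial>\<mu>s N) = m N" using prob_space.prob_space[OF psn[of N]] by simp
          finally show "(\<integral>x. F x \<partial>\<mu>s N) = 0" unfolding m_def by simp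
        qed
        have FN: "L2_norm_sq (\<mu>s N) F = 1"
        proof -
          have "(\<integral>x. (cmod (F x))^2 \<partial>\<mu>s N) = (\<integral>x. (cmod (h x - m N))^2 / s^2 \<partial>\<mu>s N)"
            unfolding F_def using s by (simp add: norm_divide power_divide)
          also have "\<dots> = Nn N / s^2" unfolding Nn_def by (rule integral_divide_zero)
          also have "\<dots> = 1" using s Npos by simp
          finally show ?thesis unfolding L2_norm_sq_def .
        qed
        define K where "K g = (\<integral>x. \<Phi> (g, x) \<partial>\<mu>s N) / Nn N" for g
        have FK: "L2_norm_sq (\<mu>s N) (\<lambda>x. koopman act g F x - F x) = K g" for g
        proof -
          have "(\<integral>x. (cmod (koopman act g F x - F x))^2 \<partial>\<mu>s N) = (\<integral>x. \<Phi> (g, x) / s^2 \<partial>\<mu>s N)"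
          proof (rule Bochner_Integration.integral_cong)
            fix x
            have "koopman act g F x - F x = (h (act (- g) x) - h x) / complex_of_real s"
              unfolding koopman_def F_def by (simp add: diff_divide_distrib)
            then show "(cmod (koopman act g F x - F x))^2 = \<Phi> (g, x) / s^2"
              unfolding \<Phi>_def using s by (simp add: norm_divide power_divide)
          qed simp
          also have "\<dots> = (\<integral>x. \<Phi> (g, x) \<partial>\<mu>s N) / s^2" by (rule integral_divide_zero)
          finally show ?thesis unfolding L2_norm_sq_def K_def using s by simp
        qed
        have seq1: "(\<lambda>n. L2_norm_sq (\<mu>s n) (fs n)) = (\<lambda>n. if n = N then 1 else 0)"
          by (rule ext) (simp add: fs_def FN zN)
        have seq2: "(\<lambda>n. L2_norm_sq (\<mu>s n) (\<lambda>x. koopman act g (fs n) x - fs n x)) = (\<lambda>n. if n = N then K g else 0)" for g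
          by (rule ext) (simp add: fs_def FK[of g, unfolded koopman_def] zN koopman_def)
        have Kb: "0 \<le> K g \<and> K g < \<epsilon>^2" if g: "g \<in> Q" for g
        proof
          have nn: "0 \<le> (\<integral>x. \<Phi> (g, x) \<partial>\<mu>s N)" unfolding \<Phi>_def by simp
          then show "0 \<le> K g" unfolding K_def using Npos by simp
          have "(\<integral>x. \<Phi> (g, x) \<partial>\<mu>s N) < 10 * \<eta>" by (rule FQ[OF g])
          also have "10 * \<eta> \<le> 40 * \<eta> * Nn N" using N1 \<eta> by simp
          finally have "K g < 40 * \<eta>" unfolding K_def using Npos by (simp add: pos_divide_less_eq)
          also have "40 * \<eta> < \<epsilon>^2" unfolding \<eta>_def using \<epsilon> by simp
          finally show "K g < \<epsilon>^2" .
        qed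
        show ?thesis
        proof (intro exI[of _ fs] conjI ballI allI)
          show "L2_0 (\<mu>s n) (fs n)" for n by (simp add: fs_def FL2 zL2)
          show "(\<lambda>n. L2_norm_sq (\<mu>s n) (fs n)) sums 1" unfolding seq1 by (rule single_sums)
          fix g assume g: "g \<in> Q"
          show "summable (\<lambda>n. L2_norm_sq (\<mu>s n) (\<lambda>x. koopman act g (fs n) x - fs n x))"
            unfolding seq2 by (rule sums_summable[OF single_sums])
          have "(\<Sum>n. L2_norm_sq (\<mu>s n) (\<lambda>x. koopman act g (fs n) x - fs n x)) = K g"
            unfolding seq2 by (rule sums_unique[OF single_sums, symmetric])
          then show "sqrt (\<Sum>n. L2_norm_sq (\<mu>s n) (\<lambda>x. koopman act g (fs n) x - fs n x)) < \<epsilon>"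
            using Kb[OF g] \<epsilon> by (simp add: lt_sq_sqrt)
        qed
      qed
    qed
    then show False using assms(7) unfolding uniform_spectral_gap_def by simp
  qed
qed

end
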